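(* Let $n\ge 2$ and let $c:E_n\to\mathbb{C}$ be an admissible edge weighting of $Q_n$. Let $x_1,x_2,y_1,y_2$ be vertices of $Q_n$ inducing a $4$-cycle with edges $e=\{x_1,y_1\}$, $f=\{y_1,x_2\}$, $g=\{x_2,y_2\}$, $h=\{y_2,x_1\}$. (1) If $c(e)\ne0$ and $c(f)\ne0$, then also $c(g)\neq 0$ and $c(h)\ne0$, and $\frac{c(e)}{c(f)} = -\overline{\left(\frac{c(g)}{c(h)}\right)}$. (2) In that case, $|c(e)|=|c(g)|$ and $|c(f)|=|c(h)|$. (3) The subgraph $Q_n(c)\subset Q_n$ is a disjoint union of sub-hypercubes.
   Context: For $n\ge1$, identify integers $0\le i<2^n$ with their $n$-digit binary representations; $i\#k$ is $i$ with its $k$-th digit flipped. The hypercube $Q_n$ has vertex classes $U_n$ (even number of $1$'s) and $V_n$ (odd number of $1$'s), with edge set $E_n$ consisting of pairs $ij$, $i\in U_n$, $j\in V_n$, $j = i\#k$ for some $k<n$; $\mathcal{N}(x)$ is the set of neighbors of $x$. For $c:E_n\to\mathbb{C}$, $Q_n(c)=(U_n(c),V_n(c),E_n(c))$ is the subgraph consisting of the edges $ij$ with $c(ij)\ne0$ and their endpoints. $c$ is admissible if $\sum_{i\in\mathcal{N}(j_1)\cap\mathcal{N}(j_2)} c(ij_1)\overline{c(ij_2)} = \delta_{j_1j_2}$ for all $j_1,j_2\in V_n(c)$ and $\sum_{j\in\mathcal{N}(i_1)\cap\mathcal{N}(i_2)} c(i_1j)\overline{c(i_2j)} = \delta_{i_1i_2}$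 for all $i_1,i_2\in U_n(c)$. A sub-hypercube of $Q_n$ is, for a set $K\subseteq\{0,\dots,n-1\}$ and a vertex $a$, the subgraph induced by all vertices agreeing with $a$ in every binary digit outside $K$. *)

theory Defs
  imports Complex_Main
begin

(* Vertices of Q_n: naturals i < 2^n; binary digit k of i is  bit i k. *)

definition flip :: "nat \<Rightarrow> nat \<Rightarrow> nat" where
  "flip i k = (if bit i k then i - 2 ^ k else i + 2 ^ k)"

definition ones :: "nat \<Rightarrow> nat \<Rightarrow> nat" where
  "ones n i = card {k. k < n \<and> bit i k}"

definition Uv :: "nat \<Rightarrow> nat set" where
  "Uv n = {i. i < 2 ^ n \<and> even (ones n i)}"

definition Vv :: "nat \<Rightarrow> nat set" where
  "Vv n = {i. i < 2 ^ n \<and> odd (ones n i)}"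

definition adj :: "nat \<Rightarrow> nat \<Rightarrow> nat \<Rightarrow> bool" where
  "adj n i j \<longleftrightarrow> i < 2 ^ n \<and> j < 2 ^ n \<and> (\<exists>k<n. j = flip i k)"

definition nbrs :: "nat \<Rightarrow> nat \<Rightarrow> nat set" where
  "nbrs n x = {y. adj n x y}"

definition Ed :: "nat \<Rightarrow> nat set set" where
  "Ed n = {{i, j} | i j. i \<in> Uv n \<and> j \<in> Vv n \<and> (\<exists>k<n. j = flip i k)}"

(* Q_n(c) for an edge weighting c (only its values on Ed n matter) *)
definition Ec :: "nat \<Rightarrow> (nat set \<Rightarrow> complex) \<Rightarrow> nat set set" where
  "Ec n c = {e \<in> Ed n. c e \<noteq> 0}"

definition Uc :: "nat \<Rightarrow> (nat set \<Rightarrow> complex) \<Rightarrow> nat set" where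
  "Uc n c = Uv n \<inter> \<Union> (Ec n c)"

definition Vc :: "nat \<Rightarrow> (nat set \<Rightarrow> complex) \<Rightarrow> nat set" where
  "Vc n c = Vv n \<inter> \<Union> (Ec n c)"

definition admissible :: "nat \<Rightarrow> (nat set \<Rightarrow> complex) \<Rightarrow> bool" where
  "admissible n c \<longleftrightarrow>
     (\<forall>j1\<in>Vc n c. \<forall>j2\<in>Vc n c.
        (\<Sum>i\<in>nbrs n j1 \<inter> nbrs n j2. c {i, j1} * cnj (c {i, j2})) = (if j1 = j2 then 1 else 0)) \<and>
     (\<forall>i1\<in>Uc n c. \<forall>i2\<in>Uc n c.
        (\<Sum>j\<in>nbrs n i1 \<inter> nbrs n i2. c {i1, j} * cnj (c {i2, j})) = (if i1 = i2 then 1 else 0))"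

definition subcube :: "nat \<Rightarrow> nat set \<Rightarrow> nat \<Rightarrow> nat set" where
  "subcube n K a = {v. v < 2 ^ n \<and> (\<forall>k<n. k \<notin> K \<longrightarrow> bit v k = bit a k)}"

definition ind_edges :: "nat \<Rightarrow> nat set \<Rightarrow> nat set set" where
  "ind_edges n S = {e \<in> Ed n. e \<subseteq> S}"

end

theory Submission imports Defs begin

lemma flip_eq: "flip i k = flip_bit k i"
proof (cases "bit i k")
  case True
  have "int (unset_bit k i) = int i - 2^k" using True
    by (simp add: of_nat_unset_bit_eq unset_bit_eq bit_of_nat_iff_bit)
  moreover have "(2::int)^k \<le> int i" using calculation by linarith
  then have "2^k \<le> i" by (metis of_nat_le_iff of_nat_numeral of_nat_power)
  then have "int (i - 2^k) = int i - 2^k" by (simp add: of_nat_diff)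
  ultimately have "unset_bit k i = i - 2^k" by linarith
  then show ?thesis using True by (simp add: flip_def flip_bit_eq_if)
next
  case False
  then show ?thesis by (simp add: flip_def flip_bit_eq_if set_bit_eq)
qed

lemma bit_flip: "bit (flip i k) j \<longleftrightarrow> (bit i j \<noteq> (j = k))"
  by (auto simp: flip_eq bit_flip_bit_iff)

lemma less_pow_iff: "(i::nat) < 2 ^ n \<longleftrightarrow> (\<forall>j. bit i j \<longrightarrow> j < n)"
  by (metis take_bit_nat_eq_self_iff bit_eq_iff bit_take_bit_iff)

lemma flip_less: "i < 2 ^ n \<Longrightarrow> k < n \<Longrightarrow> flip i k < 2 ^ n"
  by (auto simp: less_pow_iff bit_flip)

definition D :: "nat \<Rightarrow> nat \<Rightarrow> nat set" where
  "D a b = {j. bit a j \<noteq> bit b j}"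

lemma flip_iff_D: "b = flip a k \<longleftrightarrow> D a b = {k}"
  by (auto simp: D_def bit_eq_iff bit_flip)

lemma D_eq_imp: "D a b = D a c \<Longrightarrow> b = c"
  unfolding D_def bit_eq_iff by blast

lemma D_empty: "D a b = {} \<longleftrightarrow> a = b"
  by (auto simp: D_def bit_eq_iff)

lemma D_trans: "D a c = (D a b - D b c) \<union> (D b c - D a b)"
  unfolding D_def by blast

lemma D_sym: "D a b = D b a"
  unfolding D_def by blast

lemma flip_flip: "flip (flip i k) k = i"
  by (rule bit_eqI) (auto simp: bit_flip)

lemma flip_comm: "flip (flip i a) b = flip (flip i b) a"
  by (rule bit_eqI) (auto simp: bit_flip)

lemma adj_sym: "adj n a b \<Longrightarrow> adj n b a"
  unfolding adj_def by (metis flip_flip)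

lemma ones_flip:
  assumes "k < n" shows "odd (ones n (flip i k)) \<longleftrightarrow> even (ones n i)"
proof -
  let ?S = "{j. j < n \<and> bit i j}"
  have fin: "finite ?S" by simp
  show ?thesis
  proof (cases "bit i k")
    case True
    hence "{j. j < n \<and> bit (flip i k) j} = ?S - {k}" by (auto simp: bit_flip)
    moreover have "k \<in> ?S" using True assms by simp
    ultimately have "ones n (flip i k) + 1 = ones n i"
      unfolding ones_def using fin by (metis card_Diff1_le card_Suc_Diff1 Suc_eq_plus1)
    thus ?thesis by presburger
  next
    case False
    hence "{j. j < n \<and> bit (flip i k) j} = insert k ?S" using assms by (auto simp: bit_flip)
    moreover have "k \<notin> ?S" using False by simp
    ultimately have "ones n (flip i k) = ones n i + 1"
      unfolding ones_def using fin by simp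
    thus ?thesis by presburger
  qed
qed

lemma UV_cases: "i < 2 ^ n \<Longrightarrow> (i \<in> Uv n \<and> i \<notin> Vv n) \<or> (i \<in> Vv n \<and> i \<notin> Uv n)"
  by (auto simp: Uv_def Vv_def)

lemma adj_parity: "adj n a b \<Longrightarrow> (a \<in> Uv n \<longleftrightarrow> b \<in> Vv n) \<and> (a \<in> Vv n \<longleftrightarrow> b \<in> Uv n)"
  unfolding adj_def Uv_def Vv_def using ones_flip by auto

lemma adj_Ed: "adj n a b \<Longrightarrow> {a, b} \<in> Ed n"
proof -
  assume h: "adj n a b"
  then obtain k where k: "k < n" "b = flip a k" and ab: "a < 2^n" "b < 2^n" unfolding adj_def by auto
  show ?thesis
  proof (cases "a \<in> Uv n")
    case True
    then have "b \<in> Vv n" using adj_parity[OF h] by simp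
    then show ?thesis unfolding Ed_def using True k by blast
  next
    case False
    then have "a \<in> Vv n" "b \<in> Uv n" using adj_parity[OF h] UV_cases[OF ab(1)] by auto
    moreover have "a = flip b k" using k flip_flip by simp
    ultimately have "{b, a} \<in> Ed n" unfolding Ed_def using k by blast
    moreover have "{b, a} = {a, b}" by (rule insert_commute)
    ultimately show ?thesis by simp
  qed
qed

lemma Ed_adj: "e \<in> Ed n \<Longrightarrow> \<exists>a b. e = {a, b} \<and> adj n a b"
  unfolding Ed_def adj_def Uv_def Vv_def by blast

definition act :: "nat \<Rightarrow> (nat set \<Rightarrow> complex) \<Rightarrow> nat \<Rightarrow> bool" where
  "act n c p \<longleftrightarrow> (\<exists>z. adj n p z \<and> c {p, z} \<noteq> 0)"

lemma act_iff: "act n c p \<longleftrightarrow> p \<in> Uc n c \<union> Vc n c"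
proof
  assume "act n c p"
  then obtain z where z: "adj n p z" "c {p,z} \<noteq> 0" unfolding act_def by blast
  then have "{p,z} \<in> Ec n c" unfolding Ec_def using adj_Ed by blast
  moreover have "p < 2^n" using z adj_def by blast
  ultimately show "p \<in> Uc n c \<union> Vc n c" unfolding Uc_def Vc_def using UV_cases by blast
next
  assume "p \<in> Uc n c \<union> Vc n c"
  then obtain e where e: "e \<in> Ec n c" "p \<in> e" unfolding Uc_def Vc_def by blast
  then obtain a b where ab: "e = {a,b}" "adj n a b" "c e \<noteq> 0" unfolding Ec_def using Ed_adj by blast
  show "act n c p"
  proof (cases "p = a")
    case True then show ?thesis unfolding act_def using ab by blast
  next
    case False then have "p = b" using e ab by blast
    then show ?thesis unfolding act_def using ab adj_sym by (metis insert_commute)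
  qed
qed


lemma adj_D: "adj n a b \<Longrightarrow> \<exists>k<n. D a b = {k}"
  unfolding adj_def using flip_iff_D by blast

lemma common_nbrs:
  assumes d: "distinct [x1, x2, y1, y2]"
    and a1: "adj n x1 y1" and a2: "adj n y1 x2" and a3: "adj n x2 y2" and a4: "adj n y2 x1"
  shows "nbrs n x1 \<inter> nbrs n x2 = {y1, y2}"
proof
  show "{y1, y2} \<subseteq> nbrs n x1 \<inter> nbrs n x2"
    unfolding nbrs_def using a1 a3 adj_sym[OF a2] adj_sym[OF a4] by blast
next
  show "nbrs n x1 \<inter> nbrs n x2 \<subseteq> {y1, y2}"
  proof
    fix z assume "z \<in> nbrs n x1 \<inter> nbrs n x2"
    then have z1: "adj n x1 z" and "adj n x2 z" unfolding nbrs_def by auto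
    then have z2: "adj n z x2" by (rule_tac adj_sym)
    obtain a where A: "D x1 y1 = {a}" using adj_D[OF a1] by blast
    obtain b where B: "D y1 x2 = {b}" using adj_D[OF a2] by blast
    obtain dd where DD: "D y2 x2 = {dd}" using adj_D[OF a3] D_sym by metis
    obtain e where E: "D x1 y2 = {e}" using adj_D[OF a4] D_sym by metis
    obtain p where P: "D x1 z = {p}" using adj_D[OF z1] by blast
    obtain q where Q: "D z x2 = {q}" using adj_D[OF z2] by blast
    have ne: "D x1 x2 \<noteq> {}" using d by (simp add: D_empty)
    have e1: "D x1 x2 = ({a} - {b}) \<union> ({b} - {a})" using D_trans[of x1 x2 y1] A B by simp
    have e2: "D x1 x2 = ({e} - {dd}) \<union> ({dd} - {e})" using D_trans[of x1 x2 y2] E DD by simp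
    have e3: "D x1 x2 = ({p} - {q}) \<union> ({q} - {p})" using D_trans[of x1 x2 z] P Q by simp
    have ab: "a \<noteq> b" using ne e1 by auto
    have "e \<in> {a, b}" using e1 e2 ne by auto
    moreover have "e \<noteq> a"
    proof
      assume "e = a" hence "D x1 y1 = D x1 y2" using A E by simp
      hence "y1 = y2" by (rule D_eq_imp)
      thus False using d by simp
    qed
    ultimately have eb: "e = b" by simp
    have "p \<in> {a, b}" using e1 e3 ne by auto
    then show "z \<in> {y1, y2}"
    proof
      assume "p = a" hence "D x1 z = D x1 y1" using A P by simp
      hence "z = y1" by (rule D_eq_imp)
      thus ?thesis by simp
    next
      assume "p \<in> {b}" hence "D x1 z = D x1 y2" using E eb P by simp
      hence "z = y2" by (rule D_eq_imp)
      thus ?thesis by simp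
    qed
  qed
qed


lemma alg:
  fixes e f g h :: complex
  assumes ne: "e \<noteq> 0" "f \<noteq> 0" "g \<noteq> 0" "h \<noteq> 0"
    and q1: "e * cnj f + h * cnj g = 0" and q2: "e * cnj h + f * cnj g = 0"
  shows "e / f = - cnj (g / h) \<and> cmod e = cmod g \<and> cmod f = cmod h"
proof -
  have r2: "e * cnj h = - (f * cnj g)" using q2 by (simp add: eq_neg_iff_add_eq_0)
  have r1: "e * cnj f = - (h * cnj g)" using q1 by (simp add: eq_neg_iff_add_eq_0)
  have A: "e / f = - cnj (g / h)"
    using r2 ne by (simp add: field_simps complex_cnj_divide)
  have m1: "cmod e * cmod f = cmod h * cmod g" using arg_cong[OF r1, of cmod] by (simp add: norm_mult)
  have m2: "cmod e * cmod h = cmod f * cmod g" using arg_cong[OF r2, of cmod] by (simp add: norm_mult)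
  have pos: "cmod e > 0" "cmod f > 0" "cmod g > 0" "cmod h > 0" using ne by auto
  have "cmod e * cmod f * (cmod e * cmod h) = cmod h * cmod g * (cmod f * cmod g)" using m1 m2 by simp
  then have "(cmod e)^2 * (cmod f * cmod h) = (cmod g)^2 * (cmod f * cmod h)" by (simp add: power2_eq_square algebra_simps)
  then have "(cmod e)^2 = (cmod g)^2" using pos by simp
  then have B: "cmod e = cmod g" using pos by (simp add: power2_eq_iff)
  then have C: "cmod f = cmod h" using m1 pos by (simp add: mult.commute)
  show ?thesis using A B C by simp
qed

lemma orth:
  assumes adm: "admissible n c" and pq: "p \<noteq> q" and ap: "act n c p" and aq: "act n c q"
    and lp: "p < 2 ^ n" and par: "p \<in> Uv n \<longleftrightarrow> q \<in> Uv n"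
  shows "(\<Sum>z\<in>nbrs n p \<inter> nbrs n q. c {p, z} * cnj (c {q, z})) = 0"
proof (cases "p \<in> Uv n")
  case True
  have "p \<in> Uc n c" "q \<in> Uc n c" using ap aq True par act_iff[of n c] unfolding Uc_def Vc_def by auto
  then show ?thesis using adm pq unfolding admissible_def by auto
next
  case False
  have "p \<in> Vv n" using False UV_cases[OF lp] by blast
  have "q \<notin> Uv n" using False par by blast
  have "p \<in> Vc n c" "q \<in> Vc n c" using ap aq \<open>p \<notin> Uv n\<close> \<open>q \<notin> Uv n\<close> act_iff[of n c] unfolding Uc_def Vc_def by auto
  then have "(\<Sum>z\<in>nbrs n p \<inter> nbrs n q. c {z, p} * cnj (c {z, q})) = 0"
    using adm pq unfolding admissible_def by auto
  then show ?thesis by (simp add: insert_commute)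
qed

lemma square:
  assumes adm: "admissible n c" and d: "distinct [x1, x2, y1, y2]"
    and a1: "adj n x1 y1" and a2: "adj n y1 x2" and a3: "adj n x2 y2" and a4: "adj n y2 x1"
    and ce: "c {x1, y1} \<noteq> 0" and cf: "c {y1, x2} \<noteq> 0"
  shows "c {x2, y2} \<noteq> 0 \<and> c {y2, x1} \<noteq> 0 \<and>
              c {x1, y1} / c {y1, x2} = - cnj (c {x2, y2} / c {y2, x1}) \<and>
              cmod (c {x1, y1}) = cmod (c {x2, y2}) \<and>
              cmod (c {y1, x2}) = cmod (c {y2, x1})"
proof -
  define e where "e = c {x1, y1}"
  define f where "f = c {y1, x2}"
  define g where "g = c {x2, y2}"
  define h where "h = c {y2, x1}"
  have b1: "adj n y1 x1" using a1 by (rule adj_sym)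
  have b2: "adj n x2 y1" using a2 by (rule adj_sym)
  have b3: "adj n y2 x2" using a3 by (rule adj_sym)
  have b4: "adj n x1 y2" using a4 by (rule adj_sym)
  have l1: "x1 < 2 ^ n" "y1 < 2 ^ n" using a1 unfolding adj_def by auto
  have ax1: "act n c x1" unfolding act_def using a1 ce by blast
  have ax2: "act n c x2" unfolding act_def using b2 cf by (metis insert_commute)
  have par1: "x1 \<in> Uv n \<longleftrightarrow> x2 \<in> Uv n"
    using adj_parity[OF a1] adj_parity[OF a2] by blast
  have cn1: "nbrs n x1 \<inter> nbrs n x2 = {y1, y2}" by (rule common_nbrs[OF d a1 a2 a3 a4])
  have "(\<Sum>z\<in>nbrs n x1 \<inter> nbrs n x2. c {x1, z} * cnj (c {x2, z})) = 0"
    using orth[OF adm _ ax1 ax2 l1(1) par1] d by simp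
  then have q1: "e * cnj f + h * cnj g = 0" using d unfolding cn1 e_def f_def g_def h_def
    by (simp add: insert_commute)
  have "e \<noteq> 0" "f \<noteq> 0" using ce cf e_def f_def by auto
  then have "e * cnj f \<noteq> 0" by simp
  then have gh: "g \<noteq> 0" "h \<noteq> 0" using q1 by auto
  have ay1: "act n c y1" unfolding act_def using b1 ce by (metis insert_commute)
  have ay2: "act n c y2" unfolding act_def using a4 gh h_def by blast
  have par2: "y1 \<in> Uv n \<longleftrightarrow> y2 \<in> Uv n"
    using adj_parity[OF a1] adj_parity[OF a4] by blast
  have d2: "distinct [y1, y2, x1, x2]" using d by auto
  have cn2: "nbrs n y1 \<inter> nbrs n y2 = {x1, x2}" by (rule common_nbrs[OF d2 b1 b4 b3 b2])
  have "(\<Sum>z\<in>nbrs n y1 \<inter> nbrs n y2. c {y1, z} * cnj (c {y2, z})) = 0"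
    using orth[OF adm _ ay1 ay2 l1(2) par2] d by simp
  then have q2: "e * cnj h + f * cnj g = 0" using d unfolding cn2 e_def f_def g_def h_def
    by (simp add: insert_commute)
  have "e / f = - cnj (g / h) \<and> cmod e = cmod g \<and> cmod f = cmod h"
    by (rule alg) (use \<open>e \<noteq> 0\<close> \<open>f \<noteq> 0\<close> gh q1 q2 in auto)
  then show ?thesis using gh unfolding e_def f_def g_def h_def by auto
qed


definition Dir :: "nat \<Rightarrow> (nat set \<Rightarrow> complex) \<Rightarrow> nat \<Rightarrow> nat set" where
  "Dir n c v = {k. k < n \<and> c {v, flip v k} \<noteq> 0}"

lemma flip_neq: "flip i k \<noteq> i"
proof
  assume "flip i k = i" then have "bit (flip i k) k = bit i k" by simp
  then show False by (simp add: bit_flip)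
qed

lemma flip_neq2: "a \<noteq> b \<Longrightarrow> flip i a \<noteq> flip i b"
proof
  assume ab: "a \<noteq> b" and "flip i a = flip i b"
  then have "bit (flip i a) a = bit (flip i b) a" by simp
  then show False using ab by (simp add: bit_flip)
qed

lemma Dir_sub:
  assumes adm: "admissible n c" and v: "v < 2 ^ n" and k: "k \<in> Dir n c v"
  shows "Dir n c v \<subseteq> Dir n c (flip v k)"
proof
  fix b assume b: "b \<in> Dir n c v"
  define w where "w = flip v k"
  have kn: "k < n" and ck: "c {v, w} \<noteq> 0" using k unfolding Dir_def w_def by auto
  have bn: "b < n" and cb: "c {v, flip v b} \<noteq> 0" using b unfolding Dir_def by auto
  have vw: "v = flip w k" unfolding w_def by (simp add: flip_flip)
  show "b \<in> Dir n c w"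
  proof (cases "b = k")
    case True
    then show ?thesis using ck kn vw unfolding Dir_def by (simp add: insert_commute)
  next
    case False
    have wl: "w < 2 ^ n" unfolding w_def using v kn by (rule flip_less)
    have x2l: "flip v b < 2 ^ n" using v bn by (rule flip_less)
    have y2l: "flip w b < 2 ^ n" using wl bn by (rule flip_less)
    have a1: "adj n w v" unfolding adj_def using wl v kn vw by blast
    have a2: "adj n v (flip v b)" unfolding adj_def using x2l v bn by blast
    have "flip w b = flip (flip v b) k" unfolding w_def by (rule flip_comm)
    then have a3: "adj n (flip v b) (flip w b)" unfolding adj_def using x2l y2l kn by blast
    have "w = flip (flip w b) b" by (simp add: flip_flip)
    then have a4: "adj n (flip w b) w" unfolding adj_def using wl y2l bn by blast
    have n1: "w \<noteq> flip v b" unfolding w_def using False by (simp add: flip_neq2)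
    have n2: "w \<noteq> v" unfolding w_def by (rule flip_neq)
    have n3: "flip w b \<noteq> w" by (rule flip_neq)
    have n4: "flip v b \<noteq> v" by (rule flip_neq)
    have "flip w b = flip (flip v b) k" unfolding w_def by (rule flip_comm)
    then have n5: "flip w b \<noteq> flip v b" using flip_neq by simp
    have n6: "flip w b \<noteq> v"
    proof
      assume "flip w b = v"
      then have "flip (flip w b) b = flip v b" by simp
      then have "w = flip v b" by (simp add: flip_flip)
      then show False using n1 by simp
    qed
    have d: "distinct [w, flip v b, v, flip w b]" using n1 n2 n3 n4 n5 n6 by auto
    have "c {w, v} \<noteq> 0" using ck by (simp add: insert_commute)
    from square[OF adm d a1 a2 a3 a4 this cb]
    have "c {flip w b, w} \<noteq> 0" by blast
    then show ?thesis using bn unfolding Dir_def by (simp add: insert_commute)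
  qed
qed

lemma Dir_flip:
  assumes adm: "admissible n c" and v: "v < 2 ^ n" and k: "k \<in> Dir n c v"
  shows "Dir n c (flip v k) = Dir n c v"
proof
  show "Dir n c v \<subseteq> Dir n c (flip v k)" by (rule Dir_sub[OF adm v k])
  have kn: "k < n" using k unfolding Dir_def by auto
  have wl: "flip v k < 2 ^ n" using v kn by (rule flip_less)
  have "k \<in> Dir n c (flip v k)" using k unfolding Dir_def by (simp add: flip_flip insert_commute)
  from Dir_sub[OF adm wl this] show "Dir n c (flip v k) \<subseteq> Dir n c v" by (simp add: flip_flip)
qed

lemma Dir_cube_aux:
  assumes adm: "admissible n c" and v: "v < 2 ^ n"
  shows "\<forall>w. card (D v w) = m \<longrightarrow> w < 2 ^ n \<longrightarrow> D v w \<subseteq> Dir n c v \<longrightarrow> Dir n c w = Dir n c v"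
proof (induction m)
  case 0
  have fin: "finite (Dir n c v)" unfolding Dir_def by simp
  show ?case
  proof (intro allI impI)
    fix w assume "card (D v w) = 0" "w < 2 ^ n" "D v w \<subseteq> Dir n c v"
    then have "D v w = {}" using fin by (meson card_0_eq finite_subset)
    then show "Dir n c w = Dir n c v" by (simp add: D_empty)
  qed
next
  case (Suc m)
  have fin: "finite (Dir n c v)" unfolding Dir_def by simp
  show ?case
  proof (intro allI impI)
    fix w assume cw: "card (D v w) = Suc m" and wl: "w < 2 ^ n" and sub: "D v w \<subseteq> Dir n c v"
    then obtain k where kD: "k \<in> D v w" by (metis card.empty nat.distinct(1) ex_in_conv)
    have kd: "k \<in> Dir n c v" using kD sub by blast
    then have kn: "k < n" unfolding Dir_def by simp
    define w' where "w' = flip w k"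
    have w'l: "w' < 2 ^ n" unfolding w'_def using wl kn by (rule flip_less)
    have Dw': "D v w' = D v w - {k}" unfolding w'_def D_def using kD
      by (auto simp: bit_flip D_def)
    have finD: "finite (D v w)" using sub fin by (rule finite_subset)
    have "card (D v w') = m" using cw kD finD Dw' by simp
    moreover have "D v w' \<subseteq> Dir n c v" using Dw' sub by blast
    ultimately have IH: "Dir n c w' = Dir n c v" using Suc.IH w'l by blast
    have "k \<in> Dir n c w'" using kd IH by simp
    from Dir_flip[OF adm w'l this] have "Dir n c (flip w' k) = Dir n c w'" .
    moreover have "flip w' k = w" unfolding w'_def by (rule flip_flip)
    ultimately show "Dir n c w = Dir n c v" using IH by simp
  qed
qed

lemma Dir_cube:
  assumes adm: "admissible n c" and v: "v < 2 ^ n" and w: "w \<in> subcube n (Dir n c v) v"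
  shows "Dir n c w = Dir n c v"
proof -
  have wl: "w < 2 ^ n" and wb: "\<forall>k<n. k \<notin> Dir n c v \<longrightarrow> bit w k = bit v k"
    using w unfolding subcube_def by auto
  have "D v w \<subseteq> Dir n c v"
  proof
    fix j assume j: "j \<in> D v w"
    then have "bit v j \<or> bit w j" unfolding D_def by auto
    then have "j < n" using v wl less_pow_iff by blast
    then show "j \<in> Dir n c v" using wb j unfolding D_def by auto
  qed
  then show ?thesis using Dir_cube_aux[OF adm v] wl by blast
qed


lemma act_lt: "act n c v \<Longrightarrow> v < 2 ^ n"
  unfolding act_def adj_def by blast

lemma act_Dir: "act n c v \<Longrightarrow> Dir n c v \<noteq> {}"
proof -
  assume "act n c v"
  then obtain z where "adj n v z" "c {v, z} \<noteq> 0" unfolding act_def by blast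
  then obtain k where "k < n" "z = flip v k" unfolding adj_def by blast
  then have "k \<in> Dir n c v" using \<open>c {v, z} \<noteq> 0\<close> unfolding Dir_def by simp
  then show ?thesis by blast
qed

lemma Dir_act: "v < 2 ^ n \<Longrightarrow> k \<in> Dir n c v \<Longrightarrow> act n c v"
proof -
  assume v: "v < 2 ^ n" and k: "k \<in> Dir n c v"
  then have kn: "k < n" and ck: "c {v, flip v k} \<noteq> 0" unfolding Dir_def by auto
  have "adj n v (flip v k)" unfolding adj_def using v kn flip_less by blast
  then show ?thesis unfolding act_def using ck by blast
qed

lemma self_in_cube: "v < 2 ^ n \<Longrightarrow> v \<in> subcube n K v"
  unfolding subcube_def by simp

theorem lemma4p2:
  fixes n :: nat and c :: "nat set \<Rightarrow> complex"
  assumes "n \<ge> 2" and "admissible n c"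
  shows "(\<forall>x1 x2 y1 y2.
            distinct [x1, x2, y1, y2] \<and>
            adj n x1 y1 \<and> adj n y1 x2 \<and> adj n x2 y2 \<and> adj n y2 x1 \<and>
            c {x1, y1} \<noteq> 0 \<and> c {y1, x2} \<noteq> 0 \<longrightarrow>
              c {x2, y2} \<noteq> 0 \<and> c {y2, x1} \<noteq> 0 \<and>
              c {x1, y1} / c {y1, x2} = - cnj (c {x2, y2} / c {y2, x1}) \<and>
              cmod (c {x1, y1}) = cmod (c {x2, y2}) \<and>
              cmod (c {y1, x2}) = cmod (c {y2, x1}))
       \<and> (\<exists>\<C> :: (nat set \<times> nat) set.
            (\<forall>(K, a) \<in> \<C>. K \<subseteq> {..<n} \<and> a < 2 ^ n) \<and>
            (\<forall>(K, a) \<in> \<C>. \<forall>(K', a') \<in> \<C>.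
               subcube n K a \<noteq> subcube n K' a' \<longrightarrow> subcube n K a \<inter> subcube n K' a' = {}) \<and>
            Uc n c \<union> Vc n c = (\<Union>(K, a) \<in> \<C>. subcube n K a) \<and>
            Ec n c = (\<Union>(K, a) \<in> \<C>. ind_edges n (subcube n K a)))"
proof (intro conjI)
  note adm = assms(2)
  show "\<forall>x1 x2 y1 y2.
            distinct [x1, x2, y1, y2] \<and>
            adj n x1 y1 \<and> adj n y1 x2 \<and> adj n x2 y2 \<and> adj n y2 x1 \<and>
            c {x1, y1} \<noteq> 0 \<and> c {y1, x2} \<noteq> 0 \<longrightarrow>
              c {x2, y2} \<noteq> 0 \<and> c {y2, x1} \<noteq> 0 \<and>
              c {x1, y1} / c {y1, x2} = - cnj (c {x2, y2} / c {y2, x1}) \<and>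
              cmod (c {x1, y1}) = cmod (c {x2, y2}) \<and>
              cmod (c {y1, x2}) = cmod (c {y2, x1})"
    using square[OF adm] by blast
  define C where "C = (\<lambda>v. (Dir n c v, v)) ` {v. act n c v}"
  have P1: "\<forall>(K, a) \<in> C. K \<subseteq> {..<n} \<and> a < 2 ^ n"
    unfolding C_def Dir_def using act_lt by auto
  have P2: "\<forall>(K, a) \<in> C. \<forall>(K', a') \<in> C.
               subcube n K a \<noteq> subcube n K' a' \<longrightarrow> subcube n K a \<inter> subcube n K' a' = {}"
  proof -
    have D0: "subcube n K a \<inter> subcube n K' a' = {}"
      if "(K, a) \<in> C" "(K', a') \<in> C" and ne: "subcube n K a \<noteq> subcube n K' a'" for K a K' a'
    proof (rule ccontr)
      assume "subcube n K a \<inter> subcube n K' a' \<noteq> {}"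
      then obtain w where w1: "w \<in> subcube n K a" and w2: "w \<in> subcube n K' a'" by blast
      have K: "K = Dir n c a" "K' = Dir n c a'" and al: "a < 2 ^ n" "a' < 2 ^ n"
        using that(1,2) unfolding C_def using act_lt by auto
      have "Dir n c w = Dir n c a" using Dir_cube[OF adm al(1)] w1 K by simp
      moreover have "Dir n c w = Dir n c a'" using Dir_cube[OF adm al(2)] w2 K by simp
      ultimately have KK: "K = K'" using K by simp
      have "subcube n K a = subcube n K' a'"
        using w1 w2 unfolding KK subcube_def by auto
      then show False using ne by simp
    qed
    show ?thesis using D0 by blast
  qed
  have P3: "Uc n c \<union> Vc n c = (\<Union>(K, a) \<in> C. subcube n K a)"
  proof
    show "Uc n c \<union> Vc n c \<subseteq> (\<Union>(K, a) \<in> C. subcube n K a)"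
    proof
      fix v assume "v \<in> Uc n c \<union> Vc n c"
      then have "act n c v" using act_iff by blast
      then have "(Dir n c v, v) \<in> C" "v \<in> subcube n (Dir n c v) v"
        unfolding C_def using act_lt self_in_cube by auto
      then show "v \<in> (\<Union>(K, a) \<in> C. subcube n K a)" by blast
    qed
  next
    show "(\<Union>(K, a) \<in> C. subcube n K a) \<subseteq> Uc n c \<union> Vc n c"
    proof
      fix w assume "w \<in> (\<Union>(K, a) \<in> C. subcube n K a)"
      then obtain K a where "(K, a) \<in> C" and w: "w \<in> subcube n K a" by blast
      then have K: "K = Dir n c a" and aa: "act n c a" unfolding C_def by auto
      have al: "a < 2 ^ n" using aa by (rule act_lt)
      have wl: "w < 2 ^ n" using w unfolding subcube_def by simp
      have "Dir n c w = Dir n c a" using Dir_cube[OF adm al] w K by simp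
      moreover obtain k where "k \<in> Dir n c a" using act_Dir[OF aa] by blast
      ultimately have "act n c w" using Dir_act[OF wl] by simp
      then show "w \<in> Uc n c \<union> Vc n c" using act_iff by blast
    qed
  qed
  have P4: "Ec n c = (\<Union>(K, a) \<in> C. ind_edges n (subcube n K a))"
  proof
    show "Ec n c \<subseteq> (\<Union>(K, a) \<in> C. ind_edges n (subcube n K a))"
    proof
      fix e assume e: "e \<in> Ec n c"
      then have eE: "e \<in> Ed n" and ce: "c e \<noteq> 0" unfolding Ec_def by auto
      then obtain a b where ab: "e = {a, b}" "adj n a b" using Ed_adj by blast
      then obtain k where k: "k < n" "b = flip a k" and al: "a < 2 ^ n" and bl: "b < 2 ^ n"
        unfolding adj_def by blast
      have aa: "act n c a" unfolding act_def using ab ce by blast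
      have kD: "k \<in> Dir n c a" unfolding Dir_def using k ce ab by simp
      have "b \<in> subcube n (Dir n c a) a" unfolding subcube_def using bl k kD
        by (auto simp: bit_flip)
      moreover have "a \<in> subcube n (Dir n c a) a" using al by (rule self_in_cube)
      ultimately have "e \<in> ind_edges n (subcube n (Dir n c a) a)"
        unfolding ind_edges_def using eE ab by simp
      moreover have "(Dir n c a, a) \<in> C" unfolding C_def using aa by simp
      ultimately show "e \<in> (\<Union>(K, a) \<in> C. ind_edges n (subcube n K a))" by blast
    qed
  next
    show "(\<Union>(K, a) \<in> C. ind_edges n (subcube n K a)) \<subseteq> Ec n c"
    proof
      fix e assume "e \<in> (\<Union>(K, a) \<in> C. ind_edges n (subcube n K a))"
      then obtain K v where "(K, v) \<in> C" and e: "e \<in> ind_edges n (subcube n K v)" by blast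
      then have K: "K = Dir n c v" and av: "act n c v" unfolding C_def by auto
      have vl: "v < 2 ^ n" using av by (rule act_lt)
      have eE: "e \<in> Ed n" and es: "e \<subseteq> subcube n K v" using e unfolding ind_edges_def by auto
      then obtain a b where ab: "e = {a, b}" "adj n a b" using Ed_adj by blast
      then obtain k where k: "k < n" "b = flip a k" unfolding adj_def by blast
      have as: "a \<in> subcube n K v" and bs: "b \<in> subcube n K v" using es ab by auto
      have kK: "k \<in> K"
      proof (rule ccontr)
        assume "k \<notin> K"
        then have "bit a k = bit v k" "bit b k = bit v k" using as bs k unfolding subcube_def by auto
        then show False using k by (simp add: bit_flip)
      qed
      have "Dir n c a = Dir n c v" using Dir_cube[OF adm vl] as K by simp
      then have "c {a, flip a k} \<noteq> 0" using kK K unfolding Dir_def by auto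
      then show "e \<in> Ec n c" unfolding Ec_def using eE ab k by simp
    qed
  qed
  show "\<exists>\<C> :: (nat set \<times> nat) set.
            (\<forall>(K, a) \<in> \<C>. K \<subseteq> {..<n} \<and> a < 2 ^ n) \<and>
            (\<forall>(K, a) \<in> \<C>. \<forall>(K', a') \<in> \<C>.
               subcube n K a \<noteq> subcube n K' a' \<longrightarrow> subcube n K a \<inter> subcube n K' a' = {}) \<and>
            Uc n c \<union> Vc n c = (\<Union>(K, a) \<in> \<C>. subcube n K a) \<and>
            Ec n c = (\<Union>(K, a) \<in> \<C>. ind_edges n (subcube n K a))"
    using P1 P2 P3 P4 by blast
qed

end
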